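(* Let $p$ be a prime and let $G$ be a finite irreducible subgroup of $\mathrm{M}(p,\mathbb{C})$. Then $\mathrm{D}(p,\mathbb{C})\cap G$ is a maximal abelian normal subgroup of $G$.
   Context: $\mathrm{M}(p,\mathbb{C})$ is the group of monomial matrices in $\mathrm{GL}(p,\mathbb{C})$ and $\mathrm{D}(p,\mathbb{C})$ is the group of invertible diagonal matrices. *)

theory Defs
  imports "HOL-Analysis.Analysis"
begin

text \<open>Complex p x p matrices are rendered as complex^'n^'n with CARD('n) = p.\<close>

definition monomial_mat :: "complex^'n^'n \<Rightarrow> bool" where
  "monomial_mat A \<longleftrightarrow> invertible A \<and> (\<forall>i. \<exists>!j. A$i$j \<noteq> 0) \<and> (\<forall>j. \<exists>!i. A$i$j \<noteq> 0)"

definition diag_mat :: "complex^'n^'n \<Rightarrow> bool" where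
  "diag_mat A \<longleftrightarrow> invertible A \<and> (\<forall>i j. i \<noteq> j \<longrightarrow> A$i$j = 0)"

definition Mon_group :: "(complex^'n^'n) set" where
  "Mon_group = {A. monomial_mat A}"

definition Diag_group :: "(complex^'n^'n) set" where
  "Diag_group = {A. diag_mat A}"

definition mgrp_subgroup :: "(complex^'n^'n) set \<Rightarrow> bool" where
  "mgrp_subgroup H \<longleftrightarrow> H \<subseteq> {A. invertible A} \<and> mat 1 \<in> H \<and>
     (\<forall>A\<in>H. \<forall>B\<in>H. A ** B \<in> H) \<and> (\<forall>A\<in>H. matrix_inv A \<in> H)"

definition mgrp_normal :: "(complex^'n^'n) set \<Rightarrow> (complex^'n^'n) set \<Rightarrow> bool" where
  "mgrp_normal N G \<longleftrightarrow> mgrp_subgroup N \<and> N \<subseteq> G \<and>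
     (\<forall>g\<in>G. \<forall>h\<in>N. g ** h ** matrix_inv g \<in> N)"

definition mgrp_abelian :: "(complex^'n^'n) set \<Rightarrow> bool" where
  "mgrp_abelian H \<longleftrightarrow> (\<forall>A\<in>H. \<forall>B\<in>H. A ** B = B ** A)"

definition maximal_abelian_normal :: "(complex^'n^'n) set \<Rightarrow> (complex^'n^'n) set \<Rightarrow> bool" where
  "maximal_abelian_normal N G \<longleftrightarrow> mgrp_normal N G \<and> mgrp_abelian N \<and>
     (\<forall>N'. mgrp_normal N' G \<and> mgrp_abelian N' \<and> N \<subseteq> N' \<longrightarrow> N' = N)"

text \<open>Complex-linear subspaces of complex^'n (HOL-Analysis' subspace is real-linear).\<close>
definition csubspace_vec :: "(complex^'n) set \<Rightarrow> bool" where
  "csubspace_vec W \<longleftrightarrow> 0 \<in> W \<and> (\<forall>v\<in>W. \<forall>w\<in>W. v + w \<in> W) \<and> (\<forall>c. \<forall>v\<in>W. c *s v \<in> W)"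

definition irreducible_mgrp :: "(complex^'n^'n) set \<Rightarrow> bool" where
  "irreducible_mgrp G \<longleftrightarrow>
     (\<forall>W. csubspace_vec W \<and> (\<forall>A\<in>G. \<forall>v\<in>W. A *v v \<in> W) \<longrightarrow> W = {0} \<or> W = UNIV)"

end

theory Submission
  imports Defs
begin

definition pm :: "complex^'n^'n \<Rightarrow> 'n \<Rightarrow> 'n" where
  "pm A i = (THE j. A$j$i \<noteq> 0)"

lemma mono_col:
  assumes "monomial_mat A"
  shows "A$j$i \<noteq> 0 \<longleftrightarrow> j = pm A i"
proof -
  from assms have "\<exists>!j. A$j$i \<noteq> 0" unfolding monomial_mat_def by blast
  then have "A$(pm A i)$i \<noteq> 0" unfolding pm_def by (rule theI')
  with \<open>\<exists>!j. A$j$i \<noteq> 0\<close> show ?thesis by blast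
qed

lemma mono_inj:
  assumes "monomial_mat A"
  shows "inj (pm A)"
proof (rule injI)
  fix x y assume "pm A x = pm A y"
  from assms have "\<exists>!j. A$(pm A x)$j \<noteq> 0" unfolding monomial_mat_def by blast
  moreover have "A$(pm A x)$x \<noteq> 0" "A$(pm A x)$y \<noteq> 0"
    using mono_col[OF assms] \<open>pm A x = pm A y\<close> by auto
  ultimately show "x = y" by blast
qed

lemma mono_bij: "monomial_mat A \<Longrightarrow> bij (pm A)"
proof -
  assume a: "monomial_mat A"
  have i: "inj (pm A)" by (rule mono_inj[OF a])
  then have "surj (pm A)" by (simp add: finite_UNIV_inj_surj)
  with i show ?thesis by (simp add: bij_def)
qed

lemma mono_entry:
  assumes "monomial_mat A"
  shows "A$j$i = (if j = pm A i then A$(pm A i)$i else 0)"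
  using mono_col[OF assms, of j i] by auto

lemma mono_coef_nz: "monomial_mat A \<Longrightarrow> A$(pm A i)$i \<noteq> 0"
  using mono_col by blast

lemma mult_entry:
  assumes "monomial_mat B"
  shows "(A ** B)$k$i = A$k$(pm B i) * B$(pm B i)$i"
proof -
  have "(A ** B)$k$i = (\<Sum>l\<in>UNIV. A$k$l * B$l$i)"
    by (simp add: matrix_matrix_mult_def)
  also have "\<dots> = (\<Sum>l\<in>UNIV. if l = pm B i then A$k$l * B$(pm B i)$i else 0)"
  proof (rule sum.cong)
    fix l
    show "A$k$l * B$l$i = (if l = pm B i then A$k$l * B$(pm B i)$i else 0)"
      using mono_col[OF assms, of l i] by auto
  qed simp
  also have "\<dots> = A$k$(pm B i) * B$(pm B i)$i" by simp
  finally show ?thesis .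
qed

lemma pm_mult:
  assumes "monomial_mat A" "monomial_mat B" "monomial_mat (A ** B)"
  shows "pm (A ** B) i = pm A (pm B i)"
proof -
  have "(A ** B)$(pm A (pm B i))$i \<noteq> 0"
    by (simp add: mult_entry[OF assms(2)] mono_coef_nz[OF assms(1)] mono_coef_nz[OF assms(2)])
  then show ?thesis using mono_col[OF assms(3), of "pm A (pm B i)" i] by simp
qed

lemma mat1_entry: "(mat 1 :: complex^'n^'n)$j$i = (if j = i then 1 else 0)"
  by (simp add: mat_def)

lemma pm_mat1: "pm (mat 1 :: complex^'n^'n) i = i"
  unfolding pm_def by (rule the_equality) (auto simp: mat1_entry split: if_splits)

lemma matrix_inv_props:
  fixes A :: "complex^'n^'n"
  assumes "invertible A"
  shows "A ** matrix_inv A = mat 1" "matrix_inv A ** A = mat 1"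
proof -
  from assms have "\<exists>A'. A ** A' = mat 1 \<and> A' ** A = mat 1" unfolding invertible_def .
  then have "A ** matrix_inv A = mat 1 \<and> matrix_inv A ** A = mat 1"
    unfolding matrix_inv_def by (rule someI_ex)
  then show "A ** matrix_inv A = mat 1" "matrix_inv A ** A = mat 1" by auto
qed

lemma matrix_inv_inv:
  fixes A :: "complex^'n^'n"
  assumes "invertible A"
  shows "matrix_inv (matrix_inv A) = A"
proof -
  have i: "invertible (matrix_inv A)" unfolding invertible_def
    using matrix_inv_props[OF assms] by blast
  have "matrix_inv (matrix_inv A) = (A ** matrix_inv A) ** matrix_inv (matrix_inv A)"
    using matrix_inv_props[OF assms] by simp
  also have "\<dots> = A" using matrix_inv_props[OF i] by (simp flip: matrix_mul_assoc)
  finally show ?thesis .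
qed

lemma diag_iff_pm:
  assumes "monomial_mat A"
  shows "(\<forall>i j. i \<noteq> j \<longrightarrow> A$i$j = 0) \<longleftrightarrow> (\<forall>i. pm A i = i)"
  using mono_col[OF assms] by metis

lemma mv_pm:
  assumes "monomial_mat A"
  shows "(A *v x)$(pm A i) = A$(pm A i)$i * x$i"
proof -
  have "(A *v x)$(pm A i) = (\<Sum>l\<in>UNIV. A$(pm A i)$l * x$l)"
    by (simp add: matrix_vector_mult_def)
  also have "\<dots> = (\<Sum>l\<in>UNIV. if l = i then A$(pm A i)$i * x$i else 0)"
  proof (rule sum.cong)
    fix l
    have "l \<noteq> i \<Longrightarrow> A$(pm A i)$l = 0"
      using mono_col[OF assms, of "pm A i" l] inj_eq[OF mono_inj[OF assms], of l i] by auto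
    then show "A$(pm A i)$l * x$l = (if l = i then A$(pm A i)$i * x$i else 0)" by auto
  qed simp
  also have "\<dots> = A$(pm A i)$i * x$i" by simp
  finally show ?thesis .
qed

lemma mv_scale: "(A::complex^'n^'n) *v (c *s x) = c *s (A *v x)"
  by (simp add: vec_eq_iff matrix_vector_mult_def sum_distrib_left algebra_simps)

lemma test_span: "(*v) (A::complex^'n^'n) ` vec.span S = vec.span ((*v) A ` S)"
  using vec.linear_span_image[OF matrix_vector_mul_linear_gen] by metis

lemma block:
  fixes Ob :: "'n::finite \<Rightarrow> 'n set" and P :: "('n \<Rightarrow> 'n) set"
  assumes pr: "prime CARD('n)"
    and tr: "\<And>i j. \<exists>f\<in>P. f i = j"
    and inj: "\<And>f. f \<in> P \<Longrightarrow> inj f"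
    and img: "\<And>f i. f \<in> P \<Longrightarrow> f ` Ob i \<subseteq> Ob (f i)"
    and refl: "\<And>i. i \<in> Ob i"
    and cls: "\<And>i j. j \<in> Ob i \<Longrightarrow> Ob j = Ob i"
  shows "(\<forall>i. Ob i = {i}) \<or> (\<forall>i. Ob i = UNIV)"
proof -
  have le: "card (Ob i) \<le> card (Ob j)" for i j
  proof -
    obtain f where f: "f \<in> P" "f i = j" using tr by blast
    have "card (Ob i) = card (f ` Ob i)" using inj[OF f(1)] by (simp add: card_image inj_on_subset)
    also have "\<dots> \<le> card (Ob j)" using img[OF f(1), of i] f(2) by (simp add: card_mono)
    finally show ?thesis .
  qed
  obtain i0 :: 'n where True by blast
  define k where "k = card (Ob i0)"
  have ck: "\<forall>c\<in>range Ob. card c = k" using le unfolding k_def by (auto intro: antisym)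
  have dj: "\<forall>c1\<in>range Ob. \<forall>c2\<in>range Ob. c1 \<noteq> c2 \<longrightarrow> c1 \<inter> c2 = {}"
    using cls by blast
  have un: "\<Union>(range Ob) = UNIV" using refl by blast
  have "k * card (range Ob) = card (\<Union>(range Ob))"
    by (rule card_partition) (use ck dj in auto)
  then have "k dvd CARD('n)" using un by (metis dvd_triv_left)
  then have "k = 1 \<or> k = CARD('n)" using pr prime_nat_iff by blast
  then show ?thesis
  proof
    assume "k = 1"
    then have "Ob i = {i}" for i using ck refl[of i] by (metis card_1_singletonE rangeI singletonD)
    then show ?thesis by blast
  next
    assume "k = CARD('n)"
    then have "Ob i = UNIV" for i
    proof -
      have "card (Ob i) = card (UNIV::'n set)" using ck \<open>k = CARD('n)\<close> by auto
      then show ?thesis by (intro card_subset_eq) auto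
    qed
    then show ?thesis by blast
  qed
qed

lemma finite_order:
  fixes f :: "'n::finite \<Rightarrow> 'n"
  assumes "bij f"
  shows "\<exists>K>0. f ^^ K = id"
proof -
  have "\<not> inj (\<lambda>k::nat. f ^^ k)"
  proof
    assume "inj (\<lambda>k::nat. f ^^ k)"
    moreover have "finite (range (\<lambda>k::nat. f ^^ k))" by (rule finite_subset[OF subset_UNIV]) simp
    ultimately have "finite (UNIV :: nat set)" using finite_imageD by blast
    then show False by simp
  qed
  then obtain a b :: nat where ab: "a \<noteq> b" "f ^^ a = f ^^ b" unfolding inj_def by blast
  have main: "a < b \<Longrightarrow> f ^^ a = f ^^ b \<Longrightarrow> \<exists>K>0. f ^^ K = id" for a b
  proof -
    assume "a < b" "f ^^ a = f ^^ b"
    have "f ^^ b = f ^^ a \<circ> f ^^ (b - a)" using \<open>a < b\<close> by (simp flip: funpow_add)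
    then have "f ^^ a \<circ> f ^^ (b - a) = f ^^ a \<circ> id" using \<open>f ^^ a = f ^^ b\<close> by simp
    moreover have "inj (f ^^ a)" using assms bij_is_inj inj_fn by blast
    ultimately have "f ^^ (b - a) = id"
      by (metis fun.inj_map_strong inj_eq)
    then show ?thesis using \<open>a < b\<close> by (intro exI[of _ "b - a"]) auto
  qed
  show ?thesis using ab main by (metis linorder_neqE_nat)
qed


locale mg =
  fixes G :: "(complex^'n^'n) set"
  assumes pr: "prime CARD('n)"
    and sg: "mgrp_subgroup G"
    and mon: "G \<subseteq> Mon_group"
    and irr: "irreducible_mgrp G"
begin

lemma G_mono: "g \<in> G \<Longrightarrow> monomial_mat g"
  using mon by (auto simp: Mon_group_def)

lemma G_mult: "g \<in> G \<Longrightarrow> h \<in> G \<Longrightarrow> g ** h \<in> G"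
  using sg by (auto simp: mgrp_subgroup_def)

lemma G_inv: "g \<in> G \<Longrightarrow> matrix_inv g \<in> G"
  using sg by (auto simp: mgrp_subgroup_def)

lemma G_one: "mat 1 \<in> G"
  using sg by (auto simp: mgrp_subgroup_def)

lemma G_invertible: "g \<in> G \<Longrightarrow> invertible g"
  using sg by (auto simp: mgrp_subgroup_def)

lemma pmG: "g \<in> G \<Longrightarrow> h \<in> G \<Longrightarrow> pm (g ** h) i = pm g (pm h i)"
  by (rule pm_mult) (auto intro: G_mono G_mult)

lemma G_rinv: "g \<in> G \<Longrightarrow> g ** matrix_inv g = mat 1"
  using matrix_inv_props G_invertible by blast

lemma G_linv: "g \<in> G \<Longrightarrow> matrix_inv g ** g = mat 1"
  using matrix_inv_props G_invertible by blast

lemma pm_inv1: "g \<in> G \<Longrightarrow> pm g (pm (matrix_inv g) i) = i"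
  using pmG[of g "matrix_inv g" i] G_inv G_rinv pm_mat1 by metis

lemma pm_inv2: "g \<in> G \<Longrightarrow> pm (matrix_inv g) (pm g i) = i"
  using pmG[of "matrix_inv g" g i] G_inv G_linv pm_mat1 by metis

lemma pm_inj: "g \<in> G \<Longrightarrow> pm g x = pm g y \<longleftrightarrow> x = y"
  using mono_inj[OF G_mono] by (auto dest: injD)

lemma transitive: "\<exists>g\<in>G. pm g i = j"
proof -
  obtain a0 :: 'n where True by blast
  define Orb where "Orb = {pm g a0 | g. g \<in> G}"
  define W where "W = {x::complex^'n. \<forall>k. k \<notin> Orb \<longrightarrow> x$k = 0}"
  have cs: "csubspace_vec W" unfolding csubspace_vec_def W_def by auto
  have inv: "\<forall>A\<in>G. \<forall>x\<in>W. A *v x \<in> W"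
  proof (intro ballI)
    fix A x assume A: "A \<in> G" and x: "x \<in> W"
    show "A *v x \<in> W" unfolding W_def
    proof (intro CollectI allI impI)
      fix k assume k: "k \<notin> Orb"
      have "(A *v x)$k = (\<Sum>l\<in>UNIV. A$k$l * x$l)" by (simp add: matrix_vector_mult_def)
      also have "\<dots> = 0"
      proof (rule sum.neutral, intro ballI)
        fix l
        show "A$k$l * x$l = 0"
        proof (cases "A$k$l = 0")
          case False
          then have kl: "k = pm A l" using mono_col[OF G_mono[OF A]] by blast
          have "l \<notin> Orb"
          proof
            assume "l \<in> Orb"
            then obtain h where h: "h \<in> G" "l = pm h a0" unfolding Orb_def by blast
            then have "k = pm (A ** h) a0" using kl pmG[OF A h(1)] by simp
            then show False using k G_mult[OF A h(1)] unfolding Orb_def by blast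
          qed
          then show ?thesis using x unfolding W_def by simp
        qed simp
      qed
      finally show "(A *v x)$k = 0" .
    qed
  qed
  have "a0 \<in> Orb" unfolding Orb_def
    by (rule CollectI, rule exI[of _ "mat 1"]) (simp add: pm_mat1 G_one)
  then have "axis a0 1 \<in> W" unfolding W_def axis_def by auto
  moreover have "axis a0 (1::complex) \<noteq> 0" by (metis axis_nth one_neq_zero zero_index)
  ultimately have "W \<noteq> {0}" by blast
  then have "W = UNIV" using irr cs inv unfolding irreducible_mgrp_def by blast
  then have "(\<chi> k. (1::complex)) \<in> W" by simp
  then have all: "k \<in> Orb" for k unfolding W_def by auto
  obtain h where h: "h \<in> G" "i = pm h a0" using all[of i] unfolding Orb_def by blast
  obtain g where g: "g \<in> G" "j = pm g a0" using all[of j] unfolding Orb_def by blast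
  have "pm (g ** matrix_inv h) i = j"
    using pmG[OF g(1) G_inv[OF h(1)]] pm_inv2[OF h(1)] h g by simp
  then show ?thesis using G_mult[OF g(1) G_inv[OF h(1)]] by blast
qed

end

locale mgN = mg G for G :: "(complex^'n^'n) set" +
  fixes N :: "(complex^'n^'n) set" and n :: "complex^'n^'n" and a0 :: 'n
  assumes nrm: "mgrp_normal N G" and ab: "mgrp_abelian N"
    and DN: "Diag_group \<inter> G \<subseteq> N" and nN: "n \<in> N" and nd: "\<exists>i. pm n i \<noteq> i"
begin

lemma N_G: "m \<in> N \<Longrightarrow> m \<in> G"
  using nrm by (auto simp: mgrp_normal_def)

lemma N_one: "mat 1 \<in> N"
  using nrm by (auto simp: mgrp_normal_def mgrp_subgroup_def)

lemma N_mult: "m \<in> N \<Longrightarrow> m' \<in> N \<Longrightarrow> m ** m' \<in> N"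
  using nrm by (auto simp: mgrp_normal_def mgrp_subgroup_def)

lemma N_inv: "m \<in> N \<Longrightarrow> matrix_inv m \<in> N"
  using nrm by (auto simp: mgrp_normal_def mgrp_subgroup_def)

lemma N_conj: "g \<in> G \<Longrightarrow> m \<in> N \<Longrightarrow> g ** m ** matrix_inv g \<in> N"
  using nrm by (auto simp: mgrp_normal_def)

lemma N_comm: "m \<in> N \<Longrightarrow> m' \<in> N \<Longrightarrow> m ** m' = m' ** m"
  using ab by (auto simp: mgrp_abelian_def)

lemma pmN_comm: "m \<in> N \<Longrightarrow> m' \<in> N \<Longrightarrow> pm m (pm m' i) = pm m' (pm m i)"
  using pmG[OF N_G N_G, of m m' i] pmG[OF N_G N_G, of m' m i] N_comm by metis

lemma Ntrans: "\<exists>m\<in>N. pm m i = j"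
proof -
  define Ob where "Ob i = {pm m i | m. m \<in> N}" for i
  have "(\<forall>i. Ob i = {i}) \<or> (\<forall>i. Ob i = UNIV)"
  proof (rule block[where P = "pm ` G"])
    show "prime CARD('n)" by (rule pr)
    show "\<exists>f\<in>pm ` G. f i = j" for i j using transitive by blast
    show "inj f" if "f \<in> pm ` G" for f using that mono_inj G_mono by blast
    show "f ` Ob i \<subseteq> Ob (f i)" if fP: "f \<in> pm ` G" for f i
    proof
      fix y assume "y \<in> f ` Ob i"
      then obtain g m where g: "g \<in> G" "f = pm g" and m: "m \<in> N" and y: "y = pm g (pm m i)"
        using fP unfolding Ob_def by blast
      have c: "g ** m ** matrix_inv g \<in> N" using N_conj[OF g(1) m] .
      have "pm (g ** m ** matrix_inv g) (pm g i) = pm g (pm m (pm (matrix_inv g) (pm g i)))"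
        using pmG G_mult G_inv g(1) N_G[OF m] by simp
      also have "\<dots> = y" using pm_inv2[OF g(1)] y by simp
      finally show "y \<in> Ob (f i)" unfolding Ob_def using c g(2) by blast
    qed
    show "i \<in> Ob i" for i unfolding Ob_def
      by (rule CollectI, rule exI[of _ "mat 1"]) (simp add: pm_mat1 N_one)
    show "Ob j = Ob i" if jO: "j \<in> Ob i" for i j
    proof -
      obtain m where m: "m \<in> N" "j = pm m i" using jO unfolding Ob_def by blast
      have "Ob j \<subseteq> Ob i"
      proof
        fix y assume "y \<in> Ob j"
        then obtain m' where m': "m' \<in> N" "y = pm m' j" unfolding Ob_def by blast
        then have "y = pm (m' ** m) i" using pmG[OF N_G N_G, of m' m] m by simp
        then show "y \<in> Ob i" unfolding Ob_def using N_mult[OF m'(1) m(1)] by blast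
      qed
      moreover have "Ob i \<subseteq> Ob j"
      proof
        fix y assume "y \<in> Ob i"
        then obtain m' where m': "m' \<in> N" "y = pm m' i" unfolding Ob_def by blast
        have "pm (m' ** matrix_inv m) j = pm m' (pm (matrix_inv m) (pm m i))"
          using pmG[OF N_G N_G] N_inv m' m by simp
        then have "y = pm (m' ** matrix_inv m) j" using pm_inv2[OF N_G[OF m(1)]] m' by simp
        then show "y \<in> Ob j" unfolding Ob_def using N_mult[OF m'(1) N_inv[OF m(1)]] by blast
      qed
      ultimately show ?thesis by blast
    qed
  qed
  moreover have "\<not> (\<forall>i. Ob i = {i})"
  proof
    assume "\<forall>i. Ob i = {i}"
    then have "pm n i = i" for i unfolding Ob_def using nN by blast
    then show False using nd by blast
  qed
  ultimately have "Ob i = UNIV" by blast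
  then have "j \<in> Ob i" by simp
  then show ?thesis unfolding Ob_def by blast
qed

lemma agree:
  assumes "m1 \<in> N" "m2 \<in> N" "pm m1 i = pm m2 i"
  shows "pm m1 k = pm m2 k"
proof -
  obtain m where m: "m \<in> N" "pm m i = k" using Ntrans by blast
  have "pm m1 k = pm m (pm m1 i)" unfolding m(2)[symmetric] by (rule pmN_comm[OF assms(1) m(1)])
  also have "\<dots> = pm m (pm m2 i)" using assms(3) by simp
  also have "\<dots> = pm m2 k" unfolding m(2)[symmetric] by (rule pmN_comm[OF m(1) assms(2)])
  finally show ?thesis .
qed

definition r where "r = pm n"

lemma r_a0: "r a0 \<noteq> a0"
proof
  assume "r a0 = a0"
  then have "pm n k = pm (mat 1) k" for k using agree[OF nN N_one, of a0] pm_mat1 unfolding r_def by metis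
  then show False using nd pm_mat1 by metis
qed

lemma r_bij: "bij r" unfolding r_def using mono_bij G_mono N_G nN by blast

lemma r_inj: "r x = r y \<longleftrightarrow> x = y" using r_bij by (auto dest: bij_is_inj injD)

lemma rK: "\<exists>K>0. r ^^ K = id" using finite_order r_bij by blast

lemma comm_funpow: "(\<And>x. f (r x) = r (f x)) \<Longrightarrow> f ((r ^^ t) x) = (r ^^ t) (f x)"
  by (induction t) auto

lemma rall: "\<exists>t. k = (r ^^ t) a0"
proof -
  obtain K where K: "K > 0" "r ^^ K = id" using rK by blast
  define Ob where "Ob i = {(r ^^ t) i | t. True}" for i
  have "(\<forall>i. Ob i = {i}) \<or> (\<forall>i. Ob i = UNIV)"
  proof (rule block[where P = "pm ` N"])
    show "prime CARD('n)" by (rule pr)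
    show "\<exists>f\<in>pm ` N. f i = j" for i j using Ntrans by blast
    show "inj f" if "f \<in> pm ` N" for f using that mono_inj G_mono N_G by blast
    show "f ` Ob i \<subseteq> Ob (f i)" if fP: "f \<in> pm ` N" for f i
    proof -
      obtain m where m: "m \<in> N" "f = pm m" using fP by blast
      have "f (r x) = r (f x)" for x using pmN_comm[OF m(1) nN] m(2) unfolding r_def by simp
      then have "f ((r ^^ t) i) = (r ^^ t) (f i)" for t by (rule comm_funpow)
      then show ?thesis unfolding Ob_def by auto
    qed
    show "i \<in> Ob i" for i unfolding Ob_def
      by (rule CollectI, rule exI[of _ 0]) simp
    show "Ob j = Ob i" if jO: "j \<in> Ob i" for i j
    proof -
      obtain s where s: "j = (r ^^ s) i" using jO unfolding Ob_def by blast
      have idp: "(id::'n\<Rightarrow>'n) ^^ s = id" for s by (induction s) auto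
      have "(r ^^ K) ^^ s = r ^^ (K * s)" by (simp add: funpow_mult)
      then have id: "(r ^^ (K * s)) = id" using K(2) idp by simp
      have "Ob j \<subseteq> Ob i" unfolding Ob_def s by (auto simp flip: funpow_add comp_apply[of "r^^_" "r^^_"])
      moreover have "Ob i \<subseteq> Ob j"
      proof
        fix y assume "y \<in> Ob i"
        then obtain t where t: "y = (r ^^ t) i" unfolding Ob_def by blast
        have "(r ^^ (t + (K * s - s))) j = (r ^^ (t + (K * s - s) + s)) i"
          unfolding s by (simp add: funpow_add)
        also have "t + (K * s - s) + s = t + K * s"
        proof -
          have "s \<le> K * s" using K(1) by (cases K) auto
          then show ?thesis by linarith
        qed
        also have "(r ^^ (t + K * s)) i = y" using t id by (simp add: funpow_add)
        finally show "y \<in> Ob j" unfolding Ob_def by blast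
      qed
      ultimately show ?thesis by blast
    qed
  qed
  moreover have "\<not> (\<forall>i. Ob i = {i})"
  proof
    assume "\<forall>i. Ob i = {i}"
    then have "Ob a0 = {a0}" by blast
    moreover have "r a0 \<in> Ob a0" unfolding Ob_def
      by (rule CollectI, rule exI[of _ 1]) simp
    ultimately show False using r_a0 by blast
  qed
  ultimately have "Ob a0 = UNIV" by blast
  then show ?thesis unfolding Ob_def by blast
qed


lemma stab_id:
  assumes h: "h \<in> G" "pm h a0 = a0" "pm h (r a0) = r a0"
  shows "pm h k = k"
proof -
  define m where "m = h ** n ** matrix_inv h"
  have mN: "m \<in> N" unfolding m_def by (rule N_conj[OF h(1) nN])
  have p1: "pm m y = pm (h ** n) (pm (matrix_inv h) y)" for y
    unfolding m_def by (rule pmG[OF G_mult[OF h(1) N_G[OF nN]] G_inv[OF h(1)]])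
  have p2: "pm (h ** n) y = pm h (r y)" for y
    unfolding r_def by (rule pmG[OF h(1) N_G[OF nN]])
  have mh: "pm m (pm h x) = pm h (r x)" for x
    unfolding p1 p2 pm_inv2[OF h(1)] ..
  have "pm m a0 = pm h (r a0)" using mh[of a0] unfolding h(2) .
  also have "\<dots> = pm n a0" using h(3) by (simp add: r_def)
  finally have "pm m a0 = pm n a0" .
  then have mr: "pm m x = r x" for x using agree[OF mN nN, of a0 x] unfolding r_def by blast
  have "pm h (r x) = r (pm h x)" for x using mh[of x] unfolding mr by simp
  then have comm: "pm h ((r^^t) a0) = (r^^t) (pm h a0)" for t by (rule comm_funpow)
  obtain t where t: "k = (r^^t) a0" using rall by blast
  show ?thesis using comm[of t] unfolding h(2) t[symmetric] .
qed

lemma stab_inj: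
  assumes h1: "h1 \<in> G" "pm h1 a0 = a0" and h2: "h2 \<in> G" "pm h2 a0 = a0"
    and eq: "pm h1 (r a0) = pm h2 (r a0)"
  shows "pm h1 = pm h2"
proof
  fix k
  define h where "h = matrix_inv h2 ** h1"
  have hG: "h \<in> G" unfolding h_def by (rule G_mult[OF G_inv[OF h2(1)] h1(1)])
  have ph: "pm h x = pm (matrix_inv h2) (pm h1 x)" for x
    unfolding h_def by (rule pmG[OF G_inv[OF h2(1)] h1(1)])
  have "pm h a0 = a0" using ph[of a0] h1(2) h2(2) pm_inv2[OF h2(1), of a0] by simp
  moreover have "pm h (r a0) = r a0" using ph[of "r a0"] eq pm_inv2[OF h2(1), of "r a0"] by simp
  ultimately have "pm h k = k" using stab_id[OF hG] by blast
  then have "pm h2 (pm (matrix_inv h2) (pm h1 k)) = pm h2 k" using ph by simp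
  then show "pm h1 k = pm h2 k" using pm_inv1[OF h2(1)] by simp
qed

lemma n_mono: "monomial_mat n" using G_mono[OF N_G[OF nN]] .

definition c where "c x = n$(r x)$x"

lemma c_nz: "c x \<noteq> 0"
  unfolding c_def r_def by (rule mono_coef_nz[OF n_mono])

lemma nv: "(n *v x)$(r k) = c k * x$k"
  unfolding c_def r_def by (rule mv_pm[OF n_mono])

definition q where "q = (LEAST q. 0 < q \<and> (r^^q) a0 = a0)"

lemma q_props: "0 < q" "(r^^q) a0 = a0"
proof -
  obtain K where K: "K > 0" "r ^^ K = id" using rK by blast
  then have "\<exists>q. 0 < q \<and> (r^^q) a0 = a0" by auto
  from LeastI_ex[OF this] show "0 < q" "(r^^q) a0 = a0" unfolding q_def by auto
qed

lemma q_min: assumes "0 < t" "t < q" shows "(r^^t) a0 \<noteq> a0"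
  using not_less_Least[of t "\<lambda>q. 0 < q \<and> (r^^q) a0 = a0"] assms unfolding q_def by blast

definition ca where "ca t = (\<Prod>s<t. c ((r^^s) a0))"

lemma ca_Suc: "ca (Suc t) = c ((r^^t) a0) * ca t"
  unfolding ca_def by (simp add: mult.commute)

lemma ca_0: "ca 0 = 1" unfolding ca_def by simp

lemma ca_nz: "ca t \<noteq> 0"
  unfolding ca_def using c_nz by (simp add: prod_zero_iff)

definition mu where "mu = (SOME w. ca q = w ^ q)"

lemma mu_pow: "ca q = mu ^ q"
proof -
  have "q \<noteq> 0" using q_props(1) by simp
  then obtain w where "ca q = w ^ q" using exists_complex_root by blast
  then have "\<exists>w. ca q = w ^ q" by blast
  then show ?thesis unfolding mu_def by (rule someI_ex)
qed

lemma mu_nz: "mu \<noteq> 0"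
proof
  assume "mu = 0"
  then have "ca q = 0" using mu_pow q_props(1) by simp
  then show False using ca_nz by blast
qed

definition v :: "complex^'n" where
  "v = (\<chi> k. \<Sum>t<q. if (r^^t) a0 = k then ca t / mu^t else 0)"

lemma v_a0: "v$a0 = 1"
proof -
  have "v$a0 = (\<Sum>t<q. if (r^^t) a0 = a0 then ca t / mu^t else 0)" unfolding v_def by simp
  also have "\<dots> = (\<Sum>t<q. if t = 0 then 1 else 0)"
  proof (rule sum.cong)
    fix t assume tq: "t \<in> {..<q}"
    show "(if (r^^t) a0 = a0 then ca t / mu^t else 0) = (if t = 0 then 1 else 0)"
    proof (cases "t = 0")
      case True then show ?thesis by (simp add: ca_0)
    next
      case False then have "(r^^t) a0 \<noteq> a0" using q_min tq by simp
      then show ?thesis using False by simp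
    qed
  qed simp
  also have "\<dots> = 1" using q_props(1) by simp
  finally show ?thesis .
qed

lemma v_nz: "v \<noteq> 0"
proof
  assume "v = 0"
  then have "v$a0 = 0" by simp
  then show False using v_a0 by simp
qed

lemma v_eig: "n *v v = mu *s v"
proof -
  obtain q' where q': "q = Suc q'" using q_props(1) gr0_implies_Suc by blast
  define f where "f t = ca t / mu^t" for t
  have vk: "v$k = (\<Sum>t<q. if (r^^t) a0 = k then f t else 0)" for k
    unfolding v_def f_def by simp
  have fS: "mu * f (Suc s) = c ((r^^s) a0) * f s" for s
    unfolding f_def using mu_nz by (simp add: ca_Suc field_simps)
  have fq: "c ((r^^q') a0) * f q' = mu"
  proof -
    have cq: "ca (Suc q') = mu ^ Suc q'" using mu_pow q' by simp
    have "c ((r^^q') a0) * f q' = ca (Suc q') / mu^q'" unfolding f_def by (simp add: ca_Suc)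
    also have "\<dots> = mu" unfolding cq using mu_nz by simp
    finally show ?thesis .
  qed
  have f0: "f 0 = 1" unfolding f_def by (simp add: ca_0)
  have a0q: "a0 = r ((r^^q') a0)" using q_props(2) q' by simp
  have main: "c k * v$k = mu * v$(r k)" for k
  proof -
    have "v$(r k) = (\<Sum>t<Suc q'. if (r^^t) a0 = r k then f t else 0)"
      using vk[of "r k"] q' by simp
    also have "\<dots> = (\<Sum>s<q'. if (r^^(Suc s)) a0 = r k then f (Suc s) else 0)
            + (if a0 = r k then f 0 else 0)"
      unfolding sum.lessThan_Suc_shift funpow_0 by (rule add.commute)
    finally have "mu * v$(r k) = mu * ((\<Sum>s<q'. if (r^^(Suc s)) a0 = r k then f (Suc s) else 0)
            + (if a0 = r k then f 0 else 0))" by simp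
    also have "\<dots> = (\<Sum>s<q'. if (r^^s) a0 = k then c k * f s else 0)
            + (if (r^^q') a0 = k then mu else 0)"
    proof -
      have A: "(a0 = r k) \<longleftrightarrow> ((r^^q') a0 = k)" using a0q r_inj by metis
      have B: "((r^^(Suc s)) a0 = r k) \<longleftrightarrow> ((r^^s) a0 = k)" for s using r_inj by simp
      have C: "mu * (if (r^^(Suc s)) a0 = r k then f (Suc s) else 0)
               = (if (r^^s) a0 = k then c k * f s else 0)" for s
        using B[of s] fS[of s] by auto
      have D: "mu * (if a0 = r k then f 0 else 0) = (if (r^^q') a0 = k then mu else 0)"
        using A f0 by simp
      show ?thesis unfolding distrib_left sum_distrib_left C D ..
    qed
    also have "\<dots> = c k * v$k"
    proof -
      have "v$k = (\<Sum>t<Suc q'. if (r^^t) a0 = k then f t else 0)"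
        using vk[of k] q' by simp
      also have "\<dots> = (\<Sum>s<q'. if (r^^s) a0 = k then f s else 0) + (if (r^^q') a0 = k then f q' else 0)"
        by (rule sum.lessThan_Suc)
      finally have vk2: "c k * v$k = c k * ((\<Sum>s<q'. if (r^^s) a0 = k then f s else 0)
          + (if (r^^q') a0 = k then f q' else 0))" by simp
      have E1: "c k * (if (r^^s) a0 = k then f s else 0) = (if (r^^s) a0 = k then c k * f s else 0)" for s
        by simp
      have E2: "c k * (if (r^^q') a0 = k then f q' else 0) = (if (r^^q') a0 = k then mu else 0)"
        using fq by auto
      have E3: "(if (r^^q') a0 = k then c k * f q' else 0) = (if (r^^q') a0 = k then mu else 0)"
        using fq by auto
      show ?thesis unfolding vk2 distrib_left sum_distrib_left E1 E3 ..
    qed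
    finally show ?thesis by simp
  qed
  show ?thesis
  proof (subst vec_eq_iff, intro allI)
    fix y
    obtain k where "y = r k" using r_bij by (metis bij_pointE)
    then show "(n *v v)$y = (mu *s v)$y" using main nv by simp
  qed
qed

lemma eig_unique:
  assumes u: "n *v u = mu *s u"
  shows "u = u$a0 *s v"
proof -
  have su: "c x * u$x = mu * u$(r x)" for x using nv[of u x] u by (metis vector_smult_component)
  have sv: "c x * v$x = mu * v$(r x)" for x using nv[of v x] v_eig by (metis vector_smult_component)
  have "u$((r^^t) a0) = u$a0 * v$((r^^t) a0)" for t
  proof (induction t)
    case 0 then show ?case using v_a0 by simp
  next
    case (Suc t)
    define x where "x = (r^^t) a0"
    have "u$(r x) = c x * u$x / mu" using su[of x] mu_nz by (simp add: field_simps)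
    also have "\<dots> = u$a0 * (c x * v$x / mu)" using Suc unfolding x_def by simp
    also have "\<dots> = u$a0 * v$(r x)" using sv[of x] mu_nz by (simp add: field_simps)
    finally show ?case unfolding x_def by simp
  qed
  then have IH: "u$((r^^t) a0) = u$a0 * v$((r^^t) a0)" for t .
  show ?thesis
  proof (subst vec_eq_iff, intro allI)
    fix i
    obtain t where "i = (r^^t) a0" using rall by blast
    then show "u$i = (u$a0 *s v)$i" using IH by simp
  qed
qed

lemma N_eig: "m \<in> N \<Longrightarrow> m *v v = (m *v v)$a0 *s v"
proof (rule eig_unique)
  assume m: "m \<in> N"
  have "n *v (m *v v) = (n ** m) *v v" by (simp add: matrix_vector_mul_assoc)
  also have "\<dots> = (m ** n) *v v" using N_comm[OF nN m] by simp
  also have "\<dots> = m *v (mu *s v)" by (simp add: matrix_vector_mul_assoc flip: v_eig)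
  also have "\<dots> = mu *s (m *v v)" by (rule mv_scale)
  finally show "n *v (m *v v) = mu *s (m *v v)" .
qed

end


context mgN
begin

lemma contra: False
proof -
  define H where "H = {h \<in> G. pm h a0 = a0}"
  define PH where "PH = pm ` H"
  define sel where "sel \<tau> = (SOME h. h \<in> H \<and> pm h = \<tau>)" for \<tau>
  have sel: "sel \<tau> \<in> H \<and> pm (sel \<tau>) = \<tau>" if tP: "\<tau> \<in> PH" for \<tau>
  proof -
    have "\<exists>h. h \<in> H \<and> pm h = \<tau>" using tP unfolding PH_def by blast
    then show ?thesis unfolding sel_def by (rule someI_ex)
  qed
  define S where "S = (\<lambda>\<tau>. sel \<tau> *v v) ` PH"
  have finPH: "finite PH" by (rule finite_subset[OF subset_UNIV]) simp
  have cardPH: "card PH \<le> CARD('n) - 1"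
  proof -
    have inj: "inj_on (\<lambda>\<tau>. \<tau> (r a0)) PH"
    proof (rule inj_onI)
      fix \<tau>1 \<tau>2 assume t1: "\<tau>1 \<in> PH" and t2: "\<tau>2 \<in> PH" and eq: "\<tau>1 (r a0) = \<tau>2 (r a0)"
      obtain h1 where h1: "h1 \<in> H" "\<tau>1 = pm h1" using t1 unfolding PH_def by blast
      obtain h2 where h2: "h2 \<in> H" "\<tau>2 = pm h2" using t2 unfolding PH_def by blast
      have "pm h1 = pm h2"
        by (rule stab_inj) (use h1 h2 eq in \<open>auto simp: H_def\<close>)
      then show "\<tau>1 = \<tau>2" using h1 h2 by simp
    qed
    have sub: "(\<lambda>\<tau>. \<tau> (r a0)) ` PH \<subseteq> UNIV - {a0}"
    proof
      fix y assume "y \<in> (\<lambda>\<tau>. \<tau> (r a0)) ` PH"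
      then obtain h where h: "h \<in> G" "pm h a0 = a0" "y = pm h (r a0)"
        unfolding PH_def H_def by blast
      have "y \<noteq> a0"
      proof
        assume "y = a0"
        then have "pm h (r a0) = pm h a0" using h by simp
        then have "r a0 = a0" using pm_inj[OF h(1)] by blast
        then show False using r_a0 by blast
      qed
      then show "y \<in> UNIV - {a0}" by blast
    qed
    have "card PH \<le> card (UNIV - {a0})" by (rule card_inj_on_le[OF inj sub]) simp
    also have "card (UNIV - {a0}) = CARD('n) - 1" by (simp add: card_Diff_singleton)
    finally show ?thesis .
  qed
  have finS: "finite S" unfolding S_def using finPH by simp
  have cardS: "card S \<le> CARD('n) - 1"
  proof -
    have "card S \<le> card PH" unfolding S_def by (rule card_image_le[OF finPH])
    then show ?thesis using cardPH by simp
  qed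
  have key: "g *v v \<in> vec.span S" if g: "g \<in> G" for g
  proof -
    obtain m where m: "m \<in> N" "pm m a0 = pm g a0" using Ntrans by blast
    have mG: "m \<in> G" using N_G[OF m(1)] .
    define h' where "h' = matrix_inv m ** g"
    have h'G: "h' \<in> G" unfolding h'_def by (rule G_mult[OF G_inv[OF mG] g])
    have mh': "m ** h' = g" unfolding h'_def by (simp add: matrix_mul_assoc G_rinv[OF mG])
    have "pm m (pm h' a0) = pm m a0" using pmG[OF mG h'G, of a0] mh' m(2) by simp
    then have h'a0: "pm h' a0 = a0" using pm_inj[OF mG] by blast
    define m' where "m' = matrix_inv h' ** m ** matrix_inv (matrix_inv h')"
    have m'N: "m' \<in> N" unfolding m'_def by (rule N_conj[OF G_inv[OF h'G] m(1)])
    have m'eq: "m' = matrix_inv h' ** m ** h'"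
      unfolding m'_def matrix_inv_inv[OF G_invertible[OF h'G]] ..
    have hm': "h' ** m' = m ** h'" unfolding m'eq by (simp add: matrix_mul_assoc G_rinv[OF h'G])
    obtain c1 where c1: "m' *v v = c1 *s v" using N_eig[OF m'N] by blast
    have "g *v v = (h' ** m') *v v" using mh' hm' by simp
    also have "\<dots> = h' *v (m' *v v)" by (simp add: matrix_vector_mul_assoc)
    also have "\<dots> = c1 *s (h' *v v)" unfolding c1 by (rule mv_scale)
    finally have gv: "g *v v = c1 *s (h' *v v)" .
    define s where "s = sel (pm h')"
    have PHh: "pm h' \<in> PH" using h'G h'a0 unfolding PH_def H_def by blast
    then have s: "s \<in> H" "pm s = pm h'" using sel unfolding s_def by auto
    have sG: "s \<in> G" using s(1) H_def by simp
    define d where "d = matrix_inv s ** h'"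
    have dG: "d \<in> G" unfolding d_def by (rule G_mult[OF G_inv[OF sG] h'G])
    have dpm: "pm d x = x" for x
    proof -
      have "pm d x = pm (matrix_inv s) (pm h' x)" unfolding d_def by (rule pmG[OF G_inv[OF sG] h'G])
      also have "\<dots> = pm (matrix_inv s) (pm s x)" using s(2) by simp
      also have "\<dots> = x" by (rule pm_inv2[OF sG])
      finally show ?thesis .
    qed
    have "\<forall>i j. i \<noteq> j \<longrightarrow> d$i$j = 0" using diag_iff_pm[OF G_mono[OF dG]] dpm by blast
    then have "diag_mat d" unfolding diag_mat_def using G_invertible[OF dG] by blast
    then have dN: "d \<in> N" using DN dG unfolding Diag_group_def by blast
    obtain c2 where c2: "d *v v = c2 *s v" using N_eig[OF dN] by blast
    have sd: "s ** d = h'" unfolding d_def by (simp add: matrix_mul_assoc G_rinv[OF sG])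
    have "h' *v v = s *v (d *v v)" unfolding sd[symmetric] by (simp add: matrix_vector_mul_assoc)
    also have "\<dots> = c2 *s (s *v v)" unfolding c2 by (rule mv_scale)
    finally have hv: "h' *v v = c2 *s (s *v v)" .
    have sv: "s *v v \<in> S" unfolding S_def s_def using PHh by blast
    have "c1 *s (c2 *s (s *v v)) \<in> vec.span S"
      by (intro vec.span_scale vec.span_base sv)
    then show ?thesis using gv hv by simp
  qed
  define W where "W = vec.span S"
  have cs: "csubspace_vec W" unfolding csubspace_vec_def W_def
    using vec.span_zero vec.span_add vec.span_scale by blast
  have inv: "\<forall>A\<in>G. \<forall>x\<in>W. A *v x \<in> W"
  proof (intro ballI)
    fix A x assume A: "A \<in> G" and x: "x \<in> W"
    have "A *v x \<in> (*v) A ` vec.span S" using x W_def by blast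
    also have "\<dots> = vec.span ((*v) A ` S)" by (rule test_span)
    also have "\<dots> \<subseteq> W" unfolding W_def
    proof (rule vec.span_minimal)
      show "(*v) A ` S \<subseteq> vec.span S"
      proof
        fix y assume "y \<in> (*v) A ` S"
        then obtain \<tau> where t: "\<tau> \<in> PH" "y = A *v (sel \<tau> *v v)" unfolding S_def by blast
        then have "y = (A ** sel \<tau>) *v v" by (simp add: matrix_vector_mul_assoc)
        moreover have "A ** sel \<tau> \<in> G" using G_mult[OF A] sel[OF t(1)] unfolding H_def by auto
        ultimately show "y \<in> vec.span S" using key by blast
      qed
      show "vec.subspace (vec.span S)" by (rule vec.subspace_span)
    qed
    finally show "A *v x \<in> W" .
  qed
  have "v \<in> W" using key[OF G_one] unfolding W_def by simp
  then have "W \<noteq> {0}" using v_nz by blast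
  then have "W = UNIV" using irr cs inv unfolding irreducible_mgrp_def by blast
  then have d: "vec.dim (UNIV::(complex^'n) set) \<le> card S"
    using vec.dim_le_card[of UNIV S] finS unfolding W_def by simp
  have "vec.dim (UNIV::(complex^'n) set) = CARD('n)" by (rule vec_dim_card)
  then have "CARD('n) \<le> CARD('n) - 1" using d cardS by linarith
  moreover have "0 < CARD('n)" by (rule finite_UNIV_card_ge_0) simp
  ultimately show False by linarith
qed

end

lemma (in mg) D_iff: "A \<in> G \<Longrightarrow> A \<in> Diag_group \<longleftrightarrow> (\<forall>i. pm A i = i)"
  unfolding Diag_group_def diag_mat_def using diag_iff_pm[OF G_mono] G_invertible by auto

theorem corollary2p13:
  fixes G :: "(complex^'n^'n) set"
  assumes "prime CARD('n)"
    and "finite G"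
    and "mgrp_subgroup G"
    and "G \<subseteq> Mon_group"
    and "irreducible_mgrp G"
  shows "maximal_abelian_normal (Diag_group \<inter> G) G"
proof -
  interpret mg G using assms by unfold_locales auto
  let ?D = "Diag_group \<inter> G"
  have Dsub: "mgrp_subgroup ?D"
    unfolding mgrp_subgroup_def
  proof (intro conjI ballI)
    show "?D \<subseteq> {A. invertible A}" using G_invertible by blast
    show "mat 1 \<in> ?D" using D_iff[OF G_one] pm_mat1 G_one by blast
    fix A assume A: "A \<in> ?D"
    then have AG: "A \<in> G" and Ad: "\<forall>i. pm A i = i" using D_iff by auto
    show "matrix_inv A \<in> ?D"
    proof -
      have "pm (matrix_inv A) i = i" for i using pm_inv1[OF AG, of i] Ad by simp
      then show ?thesis using D_iff[OF G_inv[OF AG]] G_inv[OF AG] by blast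
    qed
    fix B assume B: "B \<in> ?D"
    then have BG: "B \<in> G" and Bd: "\<forall>i. pm B i = i" using D_iff by auto
    have "pm (A ** B) i = i" for i using pmG[OF AG BG] Ad Bd by simp
    then show "A ** B \<in> ?D" using D_iff[OF G_mult[OF AG BG]] G_mult[OF AG BG] by blast
  qed
  have Dnorm: "mgrp_normal ?D G"
    unfolding mgrp_normal_def
  proof (intro conjI ballI)
    show "mgrp_subgroup ?D" by (rule Dsub)
    show "?D \<subseteq> G" by blast
    fix g h assume g: "g \<in> G" and h: "h \<in> ?D"
    then have hG: "h \<in> G" and hd: "\<forall>i. pm h i = i" using D_iff by auto
    have gh: "g ** h ** matrix_inv g \<in> G" using G_mult[OF G_mult[OF g hG] G_inv[OF g]] .
    have "pm (g ** h ** matrix_inv g) i = i" for i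
      using pmG[OF G_mult[OF g hG] G_inv[OF g]] pmG[OF g hG] hd pm_inv1[OF g] by simp
    then show "g ** h ** matrix_inv g \<in> ?D" using D_iff[OF gh] gh by blast
  qed
  have Dab: "mgrp_abelian ?D"
    unfolding mgrp_abelian_def
  proof (intro ballI)
    fix A B assume A: "A \<in> ?D" and B: "B \<in> ?D"
    then have AG: "A \<in> G" and Ad: "\<forall>i. pm A i = i" and BG: "B \<in> G" and Bd: "\<forall>i. pm B i = i"
      using D_iff by auto
    have Az: "i \<noteq> j \<Longrightarrow> A$i$j = 0" for i j using diag_iff_pm[OF G_mono[OF AG]] Ad by blast
    have Bz: "i \<noteq> j \<Longrightarrow> B$i$j = 0" for i j using diag_iff_pm[OF G_mono[OF BG]] Bd by blast
    show "A ** B = B ** A"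
    proof (subst vec_eq_iff, intro allI, subst vec_eq_iff, intro allI)
      fix i j
      have "(A ** B)$i$j = A$i$j * B$j$j" using mult_entry[OF G_mono[OF BG]] Bd by simp
      moreover have "(B ** A)$i$j = B$i$j * A$j$j" using mult_entry[OF G_mono[OF AG]] Ad by simp
      ultimately show "(A ** B)$i$j = (B ** A)$i$j"
        using Az[of i j] Bz[of i j] by (cases "i = j") (simp_all add: mult.commute)
    qed
  qed
  show ?thesis
    unfolding maximal_abelian_normal_def
  proof (intro conjI allI impI)
    show "mgrp_normal ?D G" by (rule Dnorm)
    show "mgrp_abelian ?D" by (rule Dab)
    fix N' assume N': "mgrp_normal N' G \<and> mgrp_abelian N' \<and> ?D \<subseteq> N'"
    show "N' = ?D"
    proof
      show "?D \<subseteq> N'" using N' by blast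
      show "N' \<subseteq> ?D"
      proof
        fix m assume mN: "m \<in> N'"
        have mG: "m \<in> G" using N' mN unfolding mgrp_normal_def by blast
        show "m \<in> ?D"
        proof (rule ccontr)
          assume "m \<notin> ?D"
          then have nd: "\<exists>i. pm m i \<noteq> i" using D_iff[OF mG] mG by blast
          have "mgN G N' m"
            by (unfold_locales) (use N' mN nd in auto)
          then show False using mgN.contra by blast
        qed
      qed
    qed
  qed
qed

end
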